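(* Let $S$ be a Gröbner–Shirshov basis in $K\langle X;\Omega\rangle$ (with respect to a fixed monomial ordering $>$ on $\mathfrak{S}(X)$). Let $u_1,u_2\in\mathfrak{S}^\star(X)$ and $s_1,s_2\in S$ be such that $w=u_1|_{\overline{s_1}}=u_2|_{\overline{s_2}}$. Then $$u_1|_{s_1}\equiv u_2|_{s_2}\ \ \mathrm{mod}\,(S,w).$$
   Context: General setup. $K$ is a commutative ring with unit, $X$ a set, and $\Omega=\bigcup_{n\ge1}\Omega_n$ a set of operation symbols, $\Omega_n$ being the $n$-ary ones. For a set $A$ let $\Omega(A)=\{\delta(u_1,\dots,u_t)\mid t\ge1,\ \delta\in\Omega_t,\ u_i\in A\}$ (formal expressions). For a set $Y$, $S(Y)$ denotes the free semigroup (nonempty words) and $Y^*$ the free monoid on $Y$. Put $\mathfrak{S}_0=S(X)$ and $\mathfrak{S}_n=S(X\cup\Omega(\mathfrak{S}_{n-1}))$ for $n\ge1$; then $\mathfrak{S}_0\subset\mathfrak{S}_1\subset\cdots$ and $\mathfrak{S}(X)=\bigcup_{n\ge0}\mathfrak{S}_n$ (the $\Omega$-words). $K\langle X;\Omega\rangle$ is the free $K$-module with basis $\mathfrak{S}(X)$, with associative multiplication given by concatenation and each $\delta\in\Omega_n$ extended $K$-multilinearly; it is the free associative algebra with multiple linear operators $\Omega$ on $X$; its elements are $\Omega$-polynomials. The prime $\Omega$-words are the elements of $X\cup\Omega(\mathfrak{S}(X))$; each $u\in\mathfrak{S}(X)$ is uniquely a product $u_1\cdots u_n$ of prime $\Omega$-words,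 and $bre(u)=n$. For a symbol $\star\notin X$, $\mathfrak{S}^\star(X)$ is the set of elements of $\mathfrak{S}(X\cup\{\star\})$ containing exactly one occurrence of $\star$; for $u\in\mathfrak{S}^\star(X)$ and an $\Omega$-polynomial $s$, $u|_s$ denotes the result of replacing $\star$ by $s$ (extended linearly in $s$). A monomial ordering is a well ordering $>$ on $\mathfrak{S}(X)$ such that $w>v$ implies $u|_w>u|_v$ for all $u\in\mathfrak{S}^\star(X)$. For nonzero $f$, $\bar f$ is its largest $\Omega$-word; $f$ is monic if the coefficient of $\bar f$ is $1$. The ideal $Id(S)$ generated by a set $S$ is the $K$-span of all $u|_s$ with $u\in\mathfrak{S}^\star(X)$, $s\in S$, and $K\langle X;\Omega|S\rangle=K\langle X;\Omega\rangle/Id(S)$. For monic $f,g$: (I) if $w=\bar f a=b\bar g$ for some $a,b\in\mathfrak{S}(X)$ with $bre(w)<bre(\bar f)+bre(\bar g)$, then $(f,g)_w=fa-bg$ is an intersection composition; (II) if $w=\bar f=u|_{\bar g}$ for some $u\in\mathfrak{S}^\star(X)$, then $(f,g)_w=f-u|_g$ is an including composition. For a set $S$ of monic $\Omega$-polynomials, an $\Omega$-word $w$, and $\Omega$-polynomials $p,q$, we write $p\equiv q\ \mathrm{mod}(S,w)$ if $p-q=\sum_i\alpha_iu_i|_{s_i}$ with $\alpha_i\in K$, $u_i\in\mathfrak{S}^\star(X)$, $s_i\in S$ and $u_i|_{\overline{s_i}}<w$ for all $i$. $S$ is a Gröbner–Shirshov basis if every composition $(f,g)_w$ with $f,g\in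 S$ satisfies $(f,g)_w\equiv0\ \mathrm{mod}(S,w)$. *)

theory Defs
  imports Main "HOL-Library.Poly_Mapping"
begin

text \<open>Omega_n = {d. ar d = n}; symbols of arity 0 are never usable (t >= 1).
  A prime Omega-word is a letter or d(u_1,...,u_t); an Omega-word is a nonempty
  list of prime Omega-words (its length is bre).\<close>

datatype ('x, 'o) prm = Var 'x | App 'o "('x, 'o) prm list list"

type_synonym ('x, 'o) word = "('x, 'o) prm list"

inductive wfp :: "('o \<Rightarrow> nat) \<Rightarrow> ('x, 'o) prm \<Rightarrow> bool"
  and wfw :: "('o \<Rightarrow> nat) \<Rightarrow> ('x, 'o) word \<Rightarrow> bool"
  for ar :: "'o \<Rightarrow> nat" where
  wfp_Var: "wfp ar (Var x)"
| wfp_App: "ar d \<ge> 1 \<Longrightarrow> length ws = ar d \<Longrightarrow> list_all (wfw ar) ws \<Longrightarrow> wfp ar (App d ws)"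
| wfw_word: "ps \<noteq> [] \<Longrightarrow> list_all (wfp ar) ps \<Longrightarrow> wfw ar ps"
monos list.pred_mono

text \<open>The letter None plays the role of the symbol star.\<close>

primrec star_count :: "('x option, 'o) prm \<Rightarrow> nat" where
  "star_count (Var x) = (if x = None then 1 else 0)"
| "star_count (App d ws) = sum_list (map sum_list (map (map star_count) ws))"

definition star_word :: "('o \<Rightarrow> nat) \<Rightarrow> ('x option, 'o) word \<Rightarrow> bool" where
  "star_word ar u \<longleftrightarrow> wfw ar u \<and> sum_list (map star_count u) = 1"

primrec substp :: "('x option, 'o) prm \<Rightarrow> ('x, 'o) word \<Rightarrow> ('x, 'o) word" where
  "substp (Var x) v = (case x of None \<Rightarrow> v | Some y \<Rightarrow> [Var y])"
| "substp (App d ws) v = [App d (map concat (map (map (\<lambda>p. substp p v)) ws))]"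

definition subst :: "('x option, 'o) word \<Rightarrow> ('x, 'o) word \<Rightarrow> ('x, 'o) word" where
  "subst u v = concat (map (\<lambda>p. substp p v) u)"

definition emb :: "('x, 'o) word \<Rightarrow> ('x option, 'o) word" where
  "emb a = map (map_prm Some id) a"

type_synonym ('x, 'o, 'k) opoly = "('x, 'o) word \<Rightarrow>\<^sub>0 'k"

definition is_opoly :: "('o \<Rightarrow> nat) \<Rightarrow> ('x, 'o, 'k::zero) opoly \<Rightarrow> bool" where
  "is_opoly ar f \<longleftrightarrow> (\<forall>v\<in>Poly_Mapping.keys f. wfw ar v)"

definition subst_poly :: "('x option, 'o) word \<Rightarrow> ('x, 'o, 'k::comm_ring_1) opoly \<Rightarrow> ('x, 'o, 'k) opoly" where
  "subst_poly u s = (\<Sum>v\<in>Poly_Mapping.keys s. Poly_Mapping.single (subst u v) (Poly_Mapping.lookup s v))"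

definition smult_op :: "'k::comm_ring_1 \<Rightarrow> ('x, 'o, 'k) opoly \<Rightarrow> ('x, 'o, 'k) opoly" where
  "smult_op a f = Poly_Mapping.map ((*) a) f"

definition monomial_order :: "('o \<Rightarrow> nat) \<Rightarrow> (('x, 'o) word \<Rightarrow> ('x, 'o) word \<Rightarrow> bool) \<Rightarrow> bool" where
  "monomial_order ar lt \<longleftrightarrow>
     (\<forall>v. wfw ar v \<longrightarrow> \<not> lt v v) \<and>
     (\<forall>u v w. wfw ar u \<and> wfw ar v \<and> wfw ar w \<and> lt u v \<and> lt v w \<longrightarrow> lt u w) \<and>
     (\<forall>v w. wfw ar v \<and> wfw ar w \<longrightarrow> lt v w \<or> v = w \<or> lt w v) \<and>
     wf {(v, w). wfw ar v \<and> wfw ar w \<and> lt v w} \<and>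
     (\<forall>u v w. star_word ar u \<and> wfw ar v \<and> wfw ar w \<and> lt v w \<longrightarrow> lt (subst u v) (subst u w))"

definition lead :: "(('x, 'o) word \<Rightarrow> ('x, 'o) word \<Rightarrow> bool) \<Rightarrow> ('x, 'o, 'k::zero) opoly \<Rightarrow> ('x, 'o) word" where
  "lead lt f = (THE w. w \<in> Poly_Mapping.keys f \<and> (\<forall>v\<in>Poly_Mapping.keys f. v \<noteq> w \<longrightarrow> lt v w))"

definition monic :: "(('x, 'o) word \<Rightarrow> ('x, 'o) word \<Rightarrow> bool) \<Rightarrow> ('x, 'o, 'k::comm_ring_1) opoly \<Rightarrow> bool" where
  "monic lt f \<longleftrightarrow> f \<noteq> 0 \<and> Poly_Mapping.lookup f (lead lt f) = 1"

definition cong_mod :: "('o \<Rightarrow> nat) \<Rightarrow> (('x, 'o) word \<Rightarrow> ('x, 'o) word \<Rightarrow> bool) \<Rightarrow>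
    ('x, 'o, 'k::comm_ring_1) opoly set \<Rightarrow> ('x, 'o) word \<Rightarrow> ('x, 'o, 'k) opoly \<Rightarrow> ('x, 'o, 'k) opoly \<Rightarrow> bool" where
  "cong_mod ar lt S w p q \<longleftrightarrow>
     (\<exists>ts. p - q = (\<Sum>(a, u, s)\<leftarrow>ts. smult_op a (subst_poly u s)) \<and>
           (\<forall>(a, u, s)\<in>set ts. star_word ar u \<and> s \<in> S \<and> lt (subst u (lead lt s)) w))"

definition GSB :: "('o \<Rightarrow> nat) \<Rightarrow> (('x, 'o) word \<Rightarrow> ('x, 'o) word \<Rightarrow> bool) \<Rightarrow>
    ('x, 'o, 'k::comm_ring_1) opoly set \<Rightarrow> bool" where
  "GSB ar lt S \<longleftrightarrow>
     (\<forall>s\<in>S. is_opoly ar s \<and> monic lt s) \<and>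
     \<comment> \<open>intersection compositions\<close>
     (\<forall>f\<in>S. \<forall>g\<in>S. \<forall>a b w. wfw ar a \<and> wfw ar b \<and>
         w = lead lt f @ a \<and> w = b @ lead lt g \<and>
         length w < length (lead lt f) + length (lead lt g) \<longrightarrow>
         cong_mod ar lt S w (subst_poly (Var None # emb a) f - subst_poly (emb b @ [Var None]) g) 0) \<and>
     \<comment> \<open>including compositions\<close>
     (\<forall>f\<in>S. \<forall>g\<in>S. \<forall>u w. star_word ar u \<and> w = lead lt f \<and> w = subst u (lead lt g) \<longrightarrow>
         cong_mod ar lt S w (f - subst_poly u g) 0)"

end

theory Submission
  imports Defs
begin

lemma wfw_iff: "wfw ar ps \<longleftrightarrow> ps \<noteq> [] \<and> list_all (Defs.wfp ar) ps"
  by (auto elim: wfw.cases intro: wfw_word)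

lemma wfp_App_iff: "Defs.wfp ar (App d ws) \<longleftrightarrow> 1 \<le> ar d \<and> length ws = ar d \<and> list_all (wfw ar) ws"
  by (auto elim: wfp.cases intro: wfp_App)

datatype ('x,'o) ctx = Top "('x,'o) word" "('x,'o) word"
  | Deep "('x,'o) word" 'o "('x,'o) word list" "('x,'o) ctx" "('x,'o) word list" "('x,'o) word"

primrec fill :: "('x,'o) ctx \<Rightarrow> ('x,'o) word \<Rightarrow> ('x,'o) word" where
  "fill (Top a b) v = a @ v @ b"
| "fill (Deep a d ws1 c ws2 b) v = a @ [App d (ws1 @ [fill c v] @ ws2)] @ b"

primrec valid :: "('o \<Rightarrow> nat) \<Rightarrow> ('x,'o) ctx \<Rightarrow> bool" where
  "valid ar (Top a b) \<longleftrightarrow> list_all (Defs.wfp ar) a \<and> list_all (Defs.wfp ar) b"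
| "valid ar (Deep a d ws1 c ws2 b) \<longleftrightarrow> list_all (Defs.wfp ar) a \<and> list_all (Defs.wfp ar) b \<and>
     1 \<le> ar d \<and> length ws1 + 1 + length ws2 = ar d \<and> list_all (wfw ar) ws1 \<and> list_all (wfw ar) ws2 \<and> valid ar c"

primrec toword :: "('x,'o) ctx \<Rightarrow> ('x option,'o) word" where
  "toword (Top a b) = emb a @ [Var None] @ emb b"
| "toword (Deep a d ws1 c ws2 b) = emb a @ [App d (map emb ws1 @ [toword c] @ map emb ws2)] @ emb b"

primrec ext :: "('x,'o) word \<Rightarrow> ('x,'o) word \<Rightarrow> ('x,'o) ctx \<Rightarrow> ('x,'o) ctx" where
  "ext a b (Top a' b') = Top (a @ a') (b' @ b)"
| "ext a b (Deep a' d ws1 c ws2 b') = Deep (a @ a') d ws1 c ws2 (b' @ b)"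

primrec cmp :: "('x,'o) ctx \<Rightarrow> ('x,'o) ctx \<Rightarrow> ('x,'o) ctx" where
  "cmp (Top a b) c' = ext a b c'"
| "cmp (Deep a d ws1 c ws2 b) c' = Deep a d ws1 (cmp c c') ws2 b"

lemma fill_ext[simp]: "fill (ext a b c) v = a @ fill c v @ b"
  by (cases c) auto

lemma valid_ext[simp]: "valid ar (ext a b c) \<longleftrightarrow> list_all (Defs.wfp ar) a \<and> list_all (Defs.wfp ar) b \<and> valid ar c"
  by (cases c) auto

lemma fill_cmp[simp]: "fill (cmp c c') v = fill c (fill c' v)"
  by (induction c) auto

lemma valid_cmp: "valid ar c \<Longrightarrow> valid ar c' \<Longrightarrow> valid ar (cmp c c')"
  by (induction c) auto

lemma wfw_fill: "valid ar c \<Longrightarrow> wfw ar v \<Longrightarrow> wfw ar (fill c v)"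
  by (induction c) (auto simp: wfw_iff wfp_App_iff)

lemma substp_emb: "substp (map_prm Some id p) v = [p]"
proof (induction p)
  case (Var x) then show ?case by simp
next
  case (App d ws)
  have "\<forall>w\<in>set ws. concat (map (\<lambda>p. substp p v) (map (map_prm Some id) w)) = w"
  proof
    fix w assume "w \<in> set ws"
    then have "map (\<lambda>p. substp p v) (map (map_prm Some id) w) = map (\<lambda>p. [p]) w"
      using App by (auto simp: id_def)
    moreover have "concat (map (\<lambda>p. [p]) w) = w" by (induction w) auto
    ultimately show "concat (map (\<lambda>p. substp p v) (map (map_prm Some id) w)) = w" by metis
  qed
  then have "map concat (map (map (\<lambda>p. substp p v)) (map (map (map_prm Some id)) ws)) = ws"
    by (induction ws) auto
  then show ?case by (simp add: id_def)
qed

lemma subst_append[simp]: "subst (x @ y) v = subst x v @ subst y v"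
  by (simp add: subst_def)


lemma subst_Cons[simp]: "subst (p # y) v = substp p v @ subst y v"
  by (simp add: subst_def)

lemma subst_Nil[simp]: "subst [] v = []"
  by (simp add: subst_def)

lemma subst_emb[simp]: "subst (emb a) v = a"
  by (induction a) (simp_all add: emb_def substp_emb)

lemma emb_append[simp]: "emb (a @ b) = emb a @ emb b"
  by (simp add: emb_def)

lemma subst_toword[simp]: "subst (toword c) v = fill c v"
proof (induction c)
  case (Top a b) then show ?case by simp
next
  case (Deep a d ws1 c ws2 b)
  have e: "concat (map (\<lambda>p. substp p v) (emb w)) = w" for w
    using subst_emb[of w v] by (simp add: subst_def)
  have "map concat (map (map (\<lambda>p. substp p v)) (map emb ws)) = ws" for ws
    by (induction ws) (auto simp: e)
  moreover have "concat (map (\<lambda>p. substp p v) (toword c)) = fill c v"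
    using Deep by (simp add: subst_def)
  ultimately show ?case by simp
qed


lemma star_count_emb[simp]: "star_count (map_prm Some id p) = 0"
proof (induction p)
  case (App d ws)
  have "\<forall>w\<in>set ws. sum_list (map star_count (map (map_prm Some id) w)) = 0"
  proof
    fix w assume "w \<in> set ws"
    then show "sum_list (map star_count (map (map_prm Some id) w)) = 0"
      using App by (induction w) (auto simp: id_def)
  qed
  then show ?case by (induction ws) (auto simp: id_def)
qed simp

lemma sum_emb[simp]: "sum_list (map star_count (emb a)) = 0"
  by (induction a) (auto simp: emb_def)

lemma wf_emb: fixes p :: "('x,'o) prm" and ps :: "('x,'o) word" shows "(Defs.wfp ar p \<longrightarrow> Defs.wfp ar (map_prm Some id p)) \<and> (wfw ar ps \<longrightarrow> wfw ar (emb ps))"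
proof (rule wfp_wfw.induct[where ?P1.0="\<lambda>p. Defs.wfp ar (map_prm Some id p)" and ?P2.0="\<lambda>ps. wfw ar (emb ps)"])
  fix x show "Defs.wfp ar (map_prm Some id (Var x))" by (simp add: wfp_Var)
next
  fix d and ws :: "('x,'o) word list"
  assume a: "1 \<le> ar d" "length ws = ar d" "list_all (\<lambda>x. wfw ar x \<and> wfw ar (emb x)) ws"
  from a(3) have "list_all (wfw ar) (map (map (map_prm Some id)) ws)" by (induction ws) (auto simp: emb_def)
  with a show "Defs.wfp ar (map_prm Some id (App d ws))" by (auto simp: wfp_App_iff emb_def)
next
  fix ps :: "('x,'o) word"
  assume n: "ps \<noteq> []" and h: "list_all (\<lambda>x. Defs.wfp ar x \<and> Defs.wfp ar (map_prm Some id x)) ps"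
  from h have "list_all (Defs.wfp ar) (emb ps)" by (induction ps) (auto simp: emb_def)
  with n show "wfw ar (emb ps)" by (auto simp: wfw_iff emb_def)
qed

lemma wfp_emb: "Defs.wfp ar p \<Longrightarrow> Defs.wfp ar (map_prm Some id p)"
  using wf_emb by blast

lemma list_all_wfp_emb: "list_all (Defs.wfp ar) a \<Longrightarrow> list_all (Defs.wfp ar) (emb a)"
  by (induction a) (auto simp: emb_def wfp_emb)

lemma list_all_wfw_emb: "list_all (wfw ar) ws \<Longrightarrow> list_all (wfw ar) (map emb ws)"
  using wf_emb by (induction ws) auto

lemma star_word_toword: "valid ar c \<Longrightarrow> star_word ar (toword c)"
proof (induction c)
  case (Top a b) then show ?case
    by (auto simp: star_word_def wfw_iff list_all_wfp_emb wfp_Var)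
next
  case (Deep a d ws1 c ws2 b)
  have z: "sum_list (map sum_list (map (map star_count) (map emb ws))) = 0" for ws :: "('a,'b) word list"
    by (induction ws) auto
  from Deep show ?case
    by (auto simp: star_word_def wfw_iff list_all_wfp_emb wfp_App_iff list_all_wfw_emb z)
qed


lemma toword_ext[simp]: "toword (ext a b c) = emb a @ toword c @ emb b"
  by (cases c) auto

lemma sum1_split: "sum_list (map f xs) = (1::nat) \<Longrightarrow>
   \<exists>a p b. xs = a @ p # b \<and> f p = 1 \<and> sum_list (map f a) = 0 \<and> sum_list (map f b) = 0"
proof (induction xs)
  case Nil then show ?case by simp
next
  case (Cons x xs)
  show ?case
  proof (cases "f x = 0")
    case True
    with Cons.prems have "sum_list (map f xs) = 1" by simp
    from Cons.IH[OF this] obtain a p b where "xs = a @ p # b" "f p = 1" "sum_list (map f a) = 0" "sum_list (map f b) = 0" by blast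
    with True show ?thesis by (intro exI[of _ "x # a"] exI[of _ p] exI[of _ b]) auto
  next
    case False
    have "f x = 1 \<and> sum_list (map f xs) = 0" using Cons.prems False by (simp only: sum_list.Cons list.map) arith
    then show ?thesis by (intro exI[of _ "[]"] exI[of _ x] exI[of _ xs]) auto
  qed
qed

lemma zero_list_emb:
  "list_all (\<lambda>p. Defs.wfp ar p \<and> (star_count p = 0 \<longrightarrow> (\<exists>q. Defs.wfp ar q \<and> p = map_prm Some id q))) ps \<Longrightarrow>
   sum_list (map star_count ps) = 0 \<Longrightarrow> \<exists>qs. list_all (Defs.wfp ar) qs \<and> ps = emb qs"
proof (induction ps)
  case Nil then show ?case by (auto simp: emb_def)
next
  case (Cons p ps)
  have z: "star_count p = 0" "sum_list (map star_count ps) = 0" using Cons.prems(2) by auto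
  from Cons.prems(1) z(1) obtain q where q: "Defs.wfp ar q" "p = map_prm Some id q" by (auto simp: id_def)
  from Cons.IH Cons.prems(1) z(2) obtain qs where "list_all (Defs.wfp ar) qs" "ps = emb qs" by auto
  with q show ?case by (intro exI[of _ "q # qs"]) (simp add: emb_def)
qed

lemma zero_list_emb2:
  "list_all (\<lambda>w. wfw ar w \<and> (sum_list (map star_count w) = 0 \<longrightarrow> (\<exists>q. wfw ar q \<and> w = emb q))) ws \<Longrightarrow>
   sum_list (map (\<lambda>w. sum_list (map star_count w)) ws) = 0 \<Longrightarrow> \<exists>qs. list_all (wfw ar) qs \<and> ws = map emb qs"
proof (induction ws)
  case Nil then show ?case by auto
next
  case (Cons w ws)
  have z: "sum_list (map star_count w) = 0" "sum_list (map (\<lambda>w. sum_list (map star_count w)) ws) = 0" using Cons.prems(2) by auto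
  from Cons.prems(1) z(1) obtain q where q: "wfw ar q" "w = emb q" by auto
  from Cons.IH Cons.prems(1) z(2) obtain qs where "list_all (wfw ar) qs" "ws = map emb qs" by auto
  with q show ?case by (intro exI[of _ "q # qs"]) auto
qed

lemma star_decomp_aux:
  fixes p :: "('x option,'o) prm" and ps :: "('x option,'o) word"
  shows "(Defs.wfp ar p \<longrightarrow> (star_count p = 0 \<longrightarrow> (\<exists>q. Defs.wfp ar q \<and> p = map_prm Some id q)) \<and>
                           (star_count p = 1 \<longrightarrow> (\<exists>c. valid ar c \<and> [p] = toword c))) \<and>
         (wfw ar ps \<longrightarrow> (sum_list (map star_count ps) = 0 \<longrightarrow> (\<exists>q. wfw ar q \<and> ps = emb q)) \<and>
                           (sum_list (map star_count ps) = 1 \<longrightarrow> (\<exists>c. valid ar c \<and> ps = toword c)))"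
proof (rule wfp_wfw.induct[where ?P1.0="\<lambda>p. (star_count p = 0 \<longrightarrow> (\<exists>q. Defs.wfp ar q \<and> p = map_prm Some id q)) \<and>
                           (star_count p = 1 \<longrightarrow> (\<exists>c. valid ar c \<and> [p] = toword c))"
   and ?P2.0="\<lambda>ps. (sum_list (map star_count ps) = 0 \<longrightarrow> (\<exists>q. wfw ar q \<and> ps = emb q)) \<and>
                           (sum_list (map star_count ps) = 1 \<longrightarrow> (\<exists>c. valid ar c \<and> ps = toword c))"])
  fix x :: "'x option"
  show "(star_count (Var x) = 0 \<longrightarrow> (\<exists>q. Defs.wfp ar q \<and> Var x = map_prm Some id q)) \<and>
        (star_count (Var x) = 1 \<longrightarrow> (\<exists>c. valid ar c \<and> [Var x] = toword c))"
  proof (cases x)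
    case None
    then show ?thesis by (auto intro!: exI[of _ "Top [] []"] simp: emb_def)
  next
    case (Some y)
    then show ?thesis by (auto intro!: exI[of _ "Var y"] wfp_Var)
  qed
next
  fix d and ws :: "('x option,'o) word list"
  assume a: "1 \<le> ar d" "length ws = ar d"
    "list_all (\<lambda>w. wfw ar w \<and> (sum_list (map star_count w) = 0 \<longrightarrow> (\<exists>q. wfw ar q \<and> w = emb q)) \<and>
                           (sum_list (map star_count w) = 1 \<longrightarrow> (\<exists>c. valid ar c \<and> w = toword c))) ws"
  have sc: "star_count (App d ws) = sum_list (map (\<lambda>w. sum_list (map star_count w)) ws)"
    by (simp add: comp_def)
  show "(star_count (App d ws) = 0 \<longrightarrow> (\<exists>q. Defs.wfp ar q \<and> App d ws = map_prm Some id q)) \<and>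
        (star_count (App d ws) = 1 \<longrightarrow> (\<exists>c. valid ar c \<and> [App d ws] = toword c))"
  proof (intro conjI impI)
    assume "star_count (App d ws) = 0"
    then have z: "sum_list (map (\<lambda>w. sum_list (map star_count w)) ws) = 0" using sc by simp
    have "list_all (\<lambda>w. wfw ar w \<and> (sum_list (map star_count w) = 0 \<longrightarrow> (\<exists>q. wfw ar q \<and> w = emb q))) ws"
      using a(3) by (simp add: list_all_iff)
    from zero_list_emb2[OF this z] obtain qs where "list_all (wfw ar) qs" "ws = map emb qs" by blast
    with a show "\<exists>q. Defs.wfp ar q \<and> App d ws = map_prm Some id q"
      by (intro exI[of _ "App d qs"]) (auto simp: wfp_App_iff emb_def[abs_def])
  next
    assume "star_count (App d ws) = 1"
    then have "sum_list (map (\<lambda>w. sum_list (map star_count w)) ws) = 1" using sc by simp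
    from sum1_split[OF this] obtain wa w wb where sp: "ws = wa @ w # wb" "sum_list (map star_count w) = 1"
      "sum_list (map (\<lambda>w. sum_list (map star_count w)) wa) = 0"
      "sum_list (map (\<lambda>w. sum_list (map star_count w)) wb) = 0" by blast
    have h: "list_all (\<lambda>w. wfw ar w \<and> (sum_list (map star_count w) = 0 \<longrightarrow> (\<exists>q. wfw ar q \<and> w = emb q))) ws"
      using a(3) by (simp add: list_all_iff)
    from zero_list_emb2[OF _ sp(3)] h sp(1) obtain qa where qa: "list_all (wfw ar) qa" "wa = map emb qa" by auto
    from zero_list_emb2[OF _ sp(4)] h sp(1) obtain qb where qb: "list_all (wfw ar) qb" "wb = map emb qb" by auto
    from a(3) sp(1,2) obtain c where c: "valid ar c" "w = toword c" by auto
    show "\<exists>c. valid ar c \<and> [App d ws] = toword c"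
      using a qa qb c sp(1)
      by (intro exI[of _ "Deep [] d qa c qb []"]) (auto simp: emb_def)
  qed
next
  fix ps :: "('x option,'o) word"
  assume n: "ps \<noteq> []" and h: "list_all (\<lambda>p. Defs.wfp ar p \<and> (star_count p = 0 \<longrightarrow> (\<exists>q. Defs.wfp ar q \<and> p = map_prm Some id q)) \<and>
                           (star_count p = 1 \<longrightarrow> (\<exists>c. valid ar c \<and> [p] = toword c))) ps"
  have h0: "list_all (\<lambda>p. Defs.wfp ar p \<and> (star_count p = 0 \<longrightarrow> (\<exists>q. Defs.wfp ar q \<and> p = map_prm Some id q))) ps"
    using h by (simp add: list_all_iff)
  show "(sum_list (map star_count ps) = 0 \<longrightarrow> (\<exists>q. wfw ar q \<and> ps = emb q)) \<and>
        (sum_list (map star_count ps) = 1 \<longrightarrow> (\<exists>c. valid ar c \<and> ps = toword c))"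
  proof (intro conjI impI)
    assume "sum_list (map star_count ps) = 0"
    from zero_list_emb[OF h0 this] obtain qs where "list_all (Defs.wfp ar) qs" "ps = emb qs" by blast
    with n show "\<exists>q. wfw ar q \<and> ps = emb q" by (intro exI[of _ qs]) (auto simp: wfw_iff emb_def)
  next
    assume "sum_list (map star_count ps) = 1"
    from sum1_split[OF this] obtain pa p pb where sp: "ps = pa @ p # pb" "star_count p = 1"
      "sum_list (map star_count pa) = 0" "sum_list (map star_count pb) = 0" by blast
    from zero_list_emb[OF _ sp(3)] h0 sp(1) obtain qa where qa: "list_all (Defs.wfp ar) qa" "pa = emb qa" by auto
    from zero_list_emb[OF _ sp(4)] h0 sp(1) obtain qb where qb: "list_all (Defs.wfp ar) qb" "pb = emb qb" by auto
    from h sp(1,2) obtain c where c: "valid ar c" "[p] = toword c" by auto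
    show "\<exists>c. valid ar c \<and> ps = toword c"
      using qa qb c sp(1) by (intro exI[of _ "ext qa qb c"]) auto
  qed
qed

lemma star_decomp: "star_word ar u \<Longrightarrow> \<exists>c. valid ar c \<and> u = toword c"
  using star_decomp_aux[of ar _ u] by (auto simp: star_word_def)

definition classify :: "('o \<Rightarrow> nat) \<Rightarrow> ('x,'o) word \<Rightarrow> ('x,'o) word \<Rightarrow> (('x,'o) word \<Rightarrow> ('x,'o) word) \<Rightarrow> (('x,'o) word \<Rightarrow> ('x,'o) word) \<Rightarrow> bool" where
"classify ar v1 v2 F1 F2 \<longleftrightarrow>
  (\<exists>c. valid ar c \<and> v1 = fill c v2 \<and> (\<forall>x. F2 x = F1 (fill c x))) \<or>
  (\<exists>c. valid ar c \<and> v2 = fill c v1 \<and> (\<forall>x. F1 x = F2 (fill c x))) \<or>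
  (\<exists>A B. (\<forall>x. wfw ar x \<longrightarrow> valid ar (A x)) \<and> (\<forall>y. wfw ar y \<longrightarrow> valid ar (B y)) \<and>
     (\<forall>x y. wfw ar x \<longrightarrow> wfw ar y \<longrightarrow> fill (A x) y = fill (B y) x) \<and>
     (\<forall>y. F1 y = fill (A v2) y) \<and> (\<forall>x. F2 x = fill (B v1) x)) \<or>
  (\<exists>c a b. valid ar c \<and> wfw ar a \<and> wfw ar b \<and> v1 @ a = b @ v2 \<and> length (v1 @ a) < length v1 + length v2 \<and>
     (\<forall>x. F1 x = fill c (x @ a)) \<and> (\<forall>x. F2 x = fill c (b @ x))) \<or>
  (\<exists>c a b. valid ar c \<and> wfw ar a \<and> wfw ar b \<and> v2 @ a = b @ v1 \<and> length (v2 @ a) < length v2 + length v1 \<and>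
     (\<forall>x. F2 x = fill c (x @ a)) \<and> (\<forall>x. F1 x = fill c (b @ x)))"

lemma classify_sym: "classify ar v1 v2 F1 F2 \<Longrightarrow> classify ar v2 v1 F2 F1"
  unfolding classify_def
  apply (elim disjE)
  apply blast
  apply blast
  apply (rule disjI2, rule disjI2, rule disjI1)
  apply (elim exE conjE)
  subgoal for A B by (rule exI[of _ B], rule exI[of _ A]) metis
  apply blast
  apply blast
  done

lemma classify_lift:
  assumes "classify ar v1 v2 F1 F2"
    and L: "\<And>c. valid ar c \<Longrightarrow> valid ar (L c)" and G: "\<And>c x. fill (L c) x = G (fill c x)"
  shows "classify ar v1 v2 (\<lambda>x. G (F1 x)) (\<lambda>x. G (F2 x))"
  using assms(1) unfolding classify_def
  apply (elim disjE exE conjE)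
  subgoal for c by (rule disjI1, rule exI[of _ c]) auto
  subgoal for c by (rule disjI2, rule disjI1, rule exI[of _ c]) auto
  subgoal for A B by (rule disjI2, rule disjI2, rule disjI1, rule exI[of _ "\<lambda>x. L (A x)"], rule exI[of _ "\<lambda>x. L (B x)"]) (auto simp: L G)
  subgoal for c a b by (rule disjI2, rule disjI2, rule disjI2, rule disjI1, rule exI[of _ "L c"], rule exI[of _ a], rule exI[of _ b]) (auto simp: L G)
  subgoal for c a b by (rule disjI2, rule disjI2, rule disjI2, rule disjI2, rule exI[of _ "L c"], rule exI[of _ a], rule exI[of _ b]) (auto simp: L G)
  done

lemma classify_cong: "classify ar v1 v2 F1 F2 \<Longrightarrow> (\<And>x. F1 x = F1' x) \<Longrightarrow> (\<And>x. F2 x = F2' x) \<Longrightarrow> classify ar v1 v2 F1' F2'"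
proof -
  assume "classify ar v1 v2 F1 F2" "\<And>x. F1 x = F1' x" "\<And>x. F2 x = F2' x"
  then have "F1 = F1'" "F2 = F2'" by auto
  with \<open>classify ar v1 v2 F1 F2\<close> show ?thesis by simp
qed

lemma wfw_list_all: "wfw ar v \<Longrightarrow> list_all (Defs.wfp ar) v"
  by (simp add: wfw_iff)

lemma la_fill: "valid ar c \<Longrightarrow> wfw ar x \<Longrightarrow> list_all (Defs.wfp ar) (fill c x)"
  using wfw_fill[of ar c x] by (simp add: wfw_iff)

lemma disj_outer:
  assumes "valid ar k1" "valid ar k2" "list_all (Defs.wfp ar) a" "list_all (Defs.wfp ar) m" "list_all (Defs.wfp ar) b"
    "\<And>x. F1 x = a @ fill k1 x @ m @ fill k2 v2 @ b"
    "\<And>x. F2 x = a @ fill k1 v1 @ m @ fill k2 x @ b"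
  shows "classify ar v1 v2 F1 F2"
  unfolding classify_def
  apply (rule disjI2, rule disjI2, rule disjI1)
  apply (rule exI[of _ "\<lambda>x. ext a (m @ fill k2 x @ b) k1"], rule exI[of _ "\<lambda>y. ext (a @ fill k1 y @ m) b k2"])
  using assms by (auto simp: la_fill)

lemma disj_inner:
  assumes "valid ar k1" "valid ar k2" "list_all (Defs.wfp ar) a" "list_all (Defs.wfp ar) b"
    "list_all (wfw ar) ws1" "list_all (wfw ar) m" "list_all (wfw ar) ws2"
    "1 \<le> ar d" "length ws1 + length m + length ws2 + 2 = ar d"
    "\<And>x. F1 x = a @ [App d (ws1 @ [fill k1 x] @ m @ [fill k2 v2] @ ws2)] @ b"
    "\<And>x. F2 x = a @ [App d (ws1 @ [fill k1 v1] @ m @ [fill k2 x] @ ws2)] @ b"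
  shows "classify ar v1 v2 F1 F2"
  unfolding classify_def
  apply (rule disjI2, rule disjI2, rule disjI1)
  apply (rule exI[of _ "\<lambda>x. Deep a d ws1 k1 (m @ [fill k2 x] @ ws2) b"], rule exI[of _ "\<lambda>y. Deep a d (ws1 @ [fill k1 y] @ m) k2 ws2 b"])
  using assms by (auto simp: wfw_fill)


lemma pos1: "a1 @ p # b1 = a2 @ q # b2 \<Longrightarrow>
  (a1 = a2 \<and> p = q \<and> b1 = b2) \<or> (\<exists>m. a2 = a1 @ p # m \<and> b1 = m @ q # b2) \<or> (\<exists>m. a1 = a2 @ q # m \<and> b2 = m @ p # b1)"
proof (induction a1 arbitrary: a2)
  case Nil then show ?case by (cases a2) auto
next
  case (Cons x a1)
  then show ?case by (cases a2) auto
qed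

lemma pos2: "v1 \<noteq> [] \<Longrightarrow> a1 @ v1 @ b1 = a2 @ q # b2 \<Longrightarrow>
  (\<exists>m. a1 = a2 @ q # m \<and> b2 = m @ v1 @ b1) \<or> (\<exists>m. b1 = m @ q # b2 \<and> a2 = a1 @ v1 @ m) \<or>
  (\<exists>m n. v1 = m @ q # n \<and> a2 = a1 @ m \<and> b2 = n @ b1)"
proof (induction a1 arbitrary: a2)
  case Nil
  then show ?case
  proof (induction v1 arbitrary: a2)
    case Nil then show ?case by simp
  next
    case (Cons y v)
    show ?case
    proof (cases a2)
      case Nil
      with Cons.prems show ?thesis by auto
    next
      case (Cons z a2')
      with Cons.prems have e: "y = z" "v @ b1 = a2' @ q # b2" by auto
      show ?thesis
      proof (cases "v = []")
        case True
        with e have "b1 = a2' @ q # b2" by simp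
        with True e Cons show ?thesis by auto
      next
        case False
        from Cons.IH[OF False] e have "(\<exists>m. b1 = m @ q # b2 \<and> a2' = v @ m) \<or> (\<exists>m n. v = m @ q # n \<and> a2' = m \<and> b2 = n @ b1)"
          by auto
        with e Cons show ?thesis by (metis append_Cons append_Nil)
      qed
    qed
  qed
next
  case (Cons x a1)
  show ?case
  proof (cases a2)
    case Nil with Cons.prems show ?thesis by auto
  next
    case (Cons z a2')
    with Cons.prems have "x = z" "a1 @ v1 @ b1 = a2' @ q # b2" by auto
    from Cons.IH[OF Cons.prems(1) this(2)] \<open>x = z\<close> Cons show ?thesis by auto
  qed
qed

lemma pos3_le: "v1 \<noteq> [] \<Longrightarrow> v2 \<noteq> [] \<Longrightarrow> a1 @ v1 @ b1 = a2 @ v2 @ b2 \<Longrightarrow> length a1 \<le> length a2 \<Longrightarrow>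
  (\<exists>m n. v1 = m @ v2 @ n \<and> a2 = a1 @ m \<and> b2 = n @ b1) \<or>
  (\<exists>n. v2 = v1 @ n \<and> a1 = a2 \<and> b1 = n @ b2) \<or>
  (\<exists>m. a2 = a1 @ v1 @ m \<and> b1 = m @ v2 @ b2) \<or>
  (\<exists>a b. a \<noteq> [] \<and> b \<noteq> [] \<and> v1 @ a = b @ v2 \<and> length b < length v1 \<and> a2 = a1 @ b \<and> b1 = a @ b2)"
proof -
  assume n1: "v1 \<noteq> []" and n2: "v2 \<noteq> []" and e: "a1 @ v1 @ b1 = a2 @ v2 @ b2" and l: "length a1 \<le> length a2"
  define m0 where "m0 = drop (length a1) a2"
  have "take (length a1) (a1 @ v1 @ b1) = take (length a1) (a2 @ v2 @ b2)" using e by simp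
  then have "a1 = take (length a1) a2" using l by simp
  then have m0a: "a2 = a1 @ m0" unfolding m0_def by (metis append_take_drop_id)
  with e have m0b: "v1 @ b1 = m0 @ v2 @ b2" by simp
  note m0 = m0a m0b
  from m0(2) obtain us where "(v1 = m0 @ us \<and> us @ b1 = v2 @ b2) \<or> (v1 @ us = m0 \<and> b1 = us @ v2 @ b2)"
    by (auto simp: append_eq_append_conv2)
  then show ?thesis
  proof
    assume h: "v1 = m0 @ us \<and> us @ b1 = v2 @ b2"
    then obtain t where "(us = v2 @ t \<and> t @ b1 = b2) \<or> (us @ t = v2 \<and> b1 = t @ b2)"
      by (auto simp: append_eq_append_conv2)
    then show ?thesis
    proof
      assume "us = v2 @ t \<and> t @ b1 = b2"
      with h m0 show ?thesis by blast
    next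
      assume h2: "us @ t = v2 \<and> b1 = t @ b2"
      show ?thesis
      proof (cases "t = []")
        case True with h h2 m0 show ?thesis by auto
      next
        case tn: False
        show ?thesis
        proof (cases "us = []")
          case True with h h2 m0 show ?thesis by auto
        next
          case usn: False
          show ?thesis
          proof (cases "m0 = []")
            case True with h h2 m0 show ?thesis by auto
          next
            case False
            with h h2 m0 tn usn show ?thesis
              by (intro disjI2 disjI2 disjI2 exI[of _ t] exI[of _ m0]) auto
          qed
        qed
      qed
    qed
  next
    assume "v1 @ us = m0 \<and> b1 = us @ v2 @ b2"
    with m0 show ?thesis by auto
  qed
qed


lemma classify_incl1: "valid ar c \<Longrightarrow> v1 = fill c v2 \<Longrightarrow> (\<And>x. F2 x = F1 (fill c x)) \<Longrightarrow> classify ar v1 v2 F1 F2"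
  unfolding classify_def by blast

lemma classify_incl2: "valid ar c \<Longrightarrow> v2 = fill c v1 \<Longrightarrow> (\<And>x. F1 x = F2 (fill c x)) \<Longrightarrow> classify ar v1 v2 F1 F2"
  unfolding classify_def by blast

lemma classify_TT_le:
  assumes v: "valid ar (Top a1 b1)" "valid ar (Top a2 b2)" and w: "wfw ar v1" "wfw ar v2"
    and e: "a1 @ v1 @ b1 = a2 @ v2 @ b2" and l: "length a1 \<le> length a2"
  shows "classify ar v1 v2 (fill (Top a1 b1)) (fill (Top a2 b2))"
proof -
  have n: "v1 \<noteq> []" "v2 \<noteq> []" and la: "list_all (Defs.wfp ar) v1" "list_all (Defs.wfp ar) v2"
    using w by (auto simp: wfw_iff)
  from pos3_le[OF n e l] show ?thesis
  proof (elim disjE exE conjE)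
    fix m n assume h: "v1 = m @ v2 @ n" "a2 = a1 @ m" "b2 = n @ b1"
    show ?thesis by (rule classify_incl1[of ar "Top m n"]) (use h la in auto)
  next
    fix n assume h: "v2 = v1 @ n" "a1 = a2" "b1 = n @ b2"
    show ?thesis by (rule classify_incl2[of ar "Top [] n"]) (use h la in auto)
  next
    fix m assume h: "a2 = a1 @ v1 @ m" "b1 = m @ v2 @ b2"
    show ?thesis by (rule disj_outer[of ar "Top [] []" "Top [] []" a1 m b2]) (use h v in auto)
  next
    fix a b assume h: "a \<noteq> []" "b \<noteq> []" "v1 @ a = b @ v2" "length b < length v1" "a2 = a1 @ b" "b1 = a @ b2"
    have "length (v1 @ a) < length v1 + length v2"
      using arg_cong[OF h(3), of length] h(4) by simp
    with h v show ?thesis unfolding classify_def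
      by (intro disjI2 disjI2 disjI2 disjI1 exI[of _ "Top a1 b2"] exI[of _ a] exI[of _ b]) (auto simp: wfw_iff)
  qed
qed

lemma classify_TT:
  assumes v: "valid ar (Top a1 b1)" "valid ar (Top a2 b2)" and w: "wfw ar v1" "wfw ar v2"
    and e: "a1 @ v1 @ b1 = a2 @ v2 @ b2"
  shows "classify ar v1 v2 (fill (Top a1 b1)) (fill (Top a2 b2))"
proof (cases "length a1 \<le> length a2")
  case True then show ?thesis using classify_TT_le[OF assms] by blast
next
  case False
  then have "length a2 \<le> length a1" by simp
  from classify_TT_le[OF v(2) v(1) w(2) w(1) e[symmetric] this] show ?thesis by (rule classify_sym)
qed

lemma classify_TD:
  assumes v: "valid ar (Top a1 b1)" "valid ar (Deep a2 d ws1 c' ws2 b2)" and w: "wfw ar v1" "wfw ar v2"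
    and e: "fill (Top a1 b1) v1 = fill (Deep a2 d ws1 c' ws2 b2) v2"
  shows "classify ar v1 v2 (fill (Top a1 b1)) (fill (Deep a2 d ws1 c' ws2 b2))"
proof -
  have n: "v1 \<noteq> []" "v2 \<noteq> []" and la: "list_all (Defs.wfp ar) v1" "list_all (Defs.wfp ar) v2"
    using w by (auto simp: wfw_iff)
  let ?q = "App d (ws1 @ [fill c' v2] @ ws2)"
  let ?K = "Deep [] d ws1 c' ws2 []"
  have vK: "valid ar ?K" using v by simp
  from e have e': "a1 @ v1 @ b1 = a2 @ ?q # b2" by simp
  from pos2[OF n(1) e'] show ?thesis
  proof (elim disjE exE conjE)
    fix m assume h: "a1 = a2 @ ?q # m" "b2 = m @ v1 @ b1"
    have "classify ar v2 v1 (fill (Deep a2 d ws1 c' ws2 b2)) (fill (Top a1 b1))"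
      by (rule disj_outer[of ar ?K "Top [] []" a2 m b1]) (use h v in auto)
    then show ?thesis by (rule classify_sym)
  next
    fix m assume h: "b1 = m @ ?q # b2" "a2 = a1 @ v1 @ m"
    show ?thesis
      by (rule disj_outer[of ar "Top [] []" ?K a1 m b2]) (use h v in auto)
  next
    fix m n assume h: "v1 = m @ ?q # n" "a2 = a1 @ m" "b2 = n @ b1"
    show ?thesis by (rule classify_incl1[of ar "Deep m d ws1 c' ws2 n"]) (use h la v in auto)
  qed
qed

theorem classify_all:
  "valid ar c1 \<Longrightarrow> valid ar c2 \<Longrightarrow> wfw ar v1 \<Longrightarrow> wfw ar v2 \<Longrightarrow> fill c1 v1 = fill c2 v2 \<Longrightarrow>
   classify ar v1 v2 (fill c1) (fill c2)"
proof (induction c1 arbitrary: c2)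
  case (Top a1 b1)
  show ?case
  proof (cases c2)
    case (Top a2 b2)
    have "classify ar v1 v2 (fill (Top a1 b1)) (fill (Top a2 b2))"
      by (rule classify_TT) (use Top.prems Top in auto)
    then show ?thesis using Top by (simp only:)
  next
    case (Deep a2 d ws1 c' ws2 b2)
    have "classify ar v1 v2 (fill (Top a1 b1)) (fill (Deep a2 d ws1 c' ws2 b2))"
      by (rule classify_TD) (use Top.prems Deep in auto)
    then show ?thesis using Deep by (simp only:)
  qed
next
  case (Deep a1 d1 ws1 c1' ws2 b1)
  show ?case
  proof (cases c2)
    case (Top a2 b2)
    have "classify ar v2 v1 (fill (Top a2 b2)) (fill (Deep a1 d1 ws1 c1' ws2 b1))"
      by (rule classify_TD) (use Deep.prems Top in auto)
    then have "classify ar v2 v1 (fill c2) (fill (Deep a1 d1 ws1 c1' ws2 b1))" using Top by (simp only:)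
    then show ?thesis by (rule classify_sym)
  next
    case (Deep a2 d2 ws1' c2' ws2' b2)
    let ?p = "App d1 (ws1 @ [fill c1' v1] @ ws2)"
    let ?q = "App d2 (ws1' @ [fill c2' v2] @ ws2')"
    let ?K1 = "Deep [] d1 ws1 c1' ws2 []"
    let ?K2 = "Deep [] d2 ws1' c2' ws2' []"
    have v1: "valid ar (Deep a1 d1 ws1 c1' ws2 b1)" and v2: "valid ar (Deep a2 d2 ws1' c2' ws2' b2)"
      using Deep.prems Deep by auto
    have vK: "valid ar ?K1" "valid ar ?K2" using v1 v2 by auto
    from Deep.prems(5) Deep have e: "a1 @ ?p # b1 = a2 @ ?q # b2" by simp
    from pos1[OF e] show ?thesis
    proof (elim disjE exE conjE)
      assume h: "a1 = a2" "?p = ?q" "b1 = b2"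
      then have hd: "d1 = d2" and e2: "ws1 @ fill c1' v1 # ws2 = ws1' @ fill c2' v2 # ws2'" by auto
      from pos1[OF e2] show ?thesis
      proof (elim disjE exE conjE)
        assume h2: "ws1 = ws1'" "fill c1' v1 = fill c2' v2" "ws2 = ws2'"
        have "classify ar v1 v2 (fill c1') (fill c2')"
          using Deep.IH[of c2'] v1 v2 Deep.prems(3,4) h2(2) by simp
        have "classify ar v1 v2 (\<lambda>x. (\<lambda>y. a1 @ [App d1 (ws1 @ [y] @ ws2)] @ b1) (fill c1' x))
                                 (\<lambda>x. (\<lambda>y. a1 @ [App d1 (ws1 @ [y] @ ws2)] @ b1) (fill c2' x))"
          by (rule classify_lift[where L="\<lambda>c. Deep a1 d1 ws1 c ws2 b1"])
             (use \<open>classify ar v1 v2 (fill c1') (fill c2')\<close> v1 in auto)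
        then show ?thesis
          by (rule classify_cong) (use Deep h hd h2 in auto)
      next
        fix m assume h2: "ws1' = ws1 @ fill c1' v1 # m" "ws2 = m @ fill c2' v2 # ws2'"
        show ?thesis
          by (rule disj_inner[of ar c1' c2' a1 b1 ws1 m ws2' d1]) (use v1 v2 h2 h hd Deep in auto)
      next
        fix m assume h2: "ws1 = ws1' @ fill c2' v2 # m" "ws2' = m @ fill c1' v1 # ws2"
        have "classify ar v2 v1 (fill c2) (fill (Deep a1 d1 ws1 c1' ws2 b1))"
          by (rule disj_inner[of ar c2' c1' a1 b1 ws1' m ws2 d1]) (use v1 v2 h2 h hd Deep in auto)
        then show ?thesis by (rule classify_sym)
      qed
    next
      fix m assume h: "a2 = a1 @ ?p # m" "b1 = m @ ?q # b2"
      show ?thesis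
        by (rule disj_outer[of ar ?K1 ?K2 a1 m b2]) (use h v1 v2 Deep in auto)
    next
      fix m assume h: "a1 = a2 @ ?q # m" "b2 = m @ ?p # b1"
      have "classify ar v2 v1 (fill c2) (fill (Deep a1 d1 ws1 c1' ws2 b1))"
        by (rule disj_outer[of ar ?K2 ?K1 a2 m b1]) (use h v1 v2 Deep in auto)
      then show ?thesis by (rule classify_sym)
    qed
  qed
qed

definition pmap :: "('a \<Rightarrow> 'b) \<Rightarrow> ('a \<Rightarrow>\<^sub>0 'k::comm_ring_1) \<Rightarrow> ('b \<Rightarrow>\<^sub>0 'k)" where
  "pmap f s = (\<Sum>v\<in>Poly_Mapping.keys s. Poly_Mapping.single (f v) (Poly_Mapping.lookup s v))"

lemma subst_poly_pmap: "subst_poly u s = pmap (subst u) s"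
  by (simp add: subst_poly_def pmap_def)

lemma lookup_smult: "Poly_Mapping.lookup (smult_op a f) k = a * Poly_Mapping.lookup f k"
  unfolding smult_op_def by transfer (simp add: when_def)

lemma smult_add: "smult_op a (p + q) = smult_op a p + smult_op a q"
  by (rule poly_mapping_eqI) (simp add: lookup_smult lookup_add algebra_simps)

lemma smult_zero[simp]: "smult_op a 0 = 0"
  by (rule poly_mapping_eqI) (simp add: lookup_smult)

lemma smult_single: "smult_op a (Poly_Mapping.single v c) = Poly_Mapping.single v (a * c)"
  by (rule poly_mapping_eqI) (simp add: lookup_smult lookup_single when_def)

lemma smult_sum: "smult_op a (sum g A) = (\<Sum>i\<in>A. smult_op a (g i))"
  by (induction A rule: infinite_finite_induct) (auto simp: smult_add)

lemma smult_sum_list: "smult_op a (sum_list xs) = sum_list (map (smult_op a) xs)"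
  by (induction xs) (auto simp: smult_add)

lemma smult_smult: "smult_op a (smult_op b p) = smult_op (a * b) p"
  by (rule poly_mapping_eqI) (simp add: lookup_smult algebra_simps)

lemma smult_minus1: "smult_op (-1) p = - p"
  by (rule poly_mapping_eqI) (simp add: lookup_smult)

lemma keys_smult: "Poly_Mapping.keys (smult_op a p) \<subseteq> Poly_Mapping.keys p"
  by (auto simp: in_keys_iff lookup_smult)

lemma pmap_superset:
  assumes "finite A" "Poly_Mapping.keys s \<subseteq> A"
  shows "pmap f s = (\<Sum>v\<in>A. Poly_Mapping.single (f v) (Poly_Mapping.lookup s v))"
  unfolding pmap_def
  by (rule sum.mono_neutral_left) (use assms in \<open>auto simp: in_keys_iff\<close>)

lemma pmap_add: "pmap f (p + q) = pmap f p + pmap f q"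
proof -
  let ?A = "Poly_Mapping.keys p \<union> Poly_Mapping.keys q"
  have "pmap f (p + q) = (\<Sum>v\<in>?A. Poly_Mapping.single (f v) (Poly_Mapping.lookup (p+q) v))"
    by (rule pmap_superset) (auto simp: keys_add)
  also have "\<dots> = (\<Sum>v\<in>?A. Poly_Mapping.single (f v) (Poly_Mapping.lookup p v)) + (\<Sum>v\<in>?A. Poly_Mapping.single (f v) (Poly_Mapping.lookup q v))"
    by (simp add: lookup_add single_add sum.distrib)
  also have "\<dots> = pmap f p + pmap f q"
    by (subst (1 2) pmap_superset[of ?A]) auto
  finally show ?thesis .
qed

lemma pmap_zero[simp]: "pmap f 0 = 0"
  by (simp add: pmap_def)

lemma pmap_single[simp]: "pmap f (Poly_Mapping.single v c) = Poly_Mapping.single (f v) c"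
proof -
  have "pmap f (Poly_Mapping.single v c) = (\<Sum>w\<in>{v}. Poly_Mapping.single (f w) (Poly_Mapping.lookup (Poly_Mapping.single v c) w))"
    by (rule pmap_superset) auto
  then show ?thesis by simp
qed

lemma pmap_uminus: "pmap f (- p) = - pmap f p"
proof -
  have "pmap f (- p) + pmap f p = 0" by (simp flip: pmap_add)
  then show ?thesis by (simp add: eq_neg_iff_add_eq_0)
qed

lemma pmap_diff: "pmap f (p - q) = pmap f p - pmap f q"
  using pmap_add[of f p "- q"] by (simp add: pmap_uminus)

lemma pmap_sum: "pmap f (sum g A) = (\<Sum>i\<in>A. pmap f (g i))"
  by (induction A rule: infinite_finite_induct) (auto simp: pmap_add)

lemma pmap_sum_list: "pmap f (sum_list xs) = sum_list (map (pmap f) xs)"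
  by (induction xs) (auto simp: pmap_add)

lemma pmap_smult: "pmap f (smult_op a p) = smult_op a (pmap f p)"
proof -
  have "pmap f (smult_op a p) = (\<Sum>v\<in>Poly_Mapping.keys p. Poly_Mapping.single (f v) (Poly_Mapping.lookup (smult_op a p) v))"
    by (rule pmap_superset) (auto simp: keys_smult)
  also have "\<dots> = smult_op a (pmap f p)"
    by (simp add: pmap_def smult_sum smult_single lookup_smult)
  finally show ?thesis .
qed

lemma pmap_pmap: "pmap f (pmap g p) = pmap (\<lambda>x. f (g x)) p"
  unfolding pmap_def[of g] by (simp add: pmap_sum pmap_def[of "\<lambda>x. f (g x)"])

lemma pmap_cong: "(\<And>v. v \<in> Poly_Mapping.keys p \<Longrightarrow> f v = g v) \<Longrightarrow> pmap f p = pmap g p"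
  unfolding pmap_def by (rule sum.cong) auto

lemma mo_irrefl: "monomial_order ar lt \<Longrightarrow> wfw ar v \<Longrightarrow> \<not> lt v v"
  unfolding monomial_order_def by blast
lemma mo_trans: "monomial_order ar lt \<Longrightarrow> wfw ar u \<Longrightarrow> wfw ar v \<Longrightarrow> wfw ar w \<Longrightarrow> lt u v \<Longrightarrow> lt v w \<Longrightarrow> lt u w"
  unfolding monomial_order_def by blast
lemma mo_total: "monomial_order ar lt \<Longrightarrow> wfw ar v \<Longrightarrow> wfw ar w \<Longrightarrow> lt v w \<or> v = w \<or> lt w v"
  unfolding monomial_order_def by blast
lemma mo_mono: "monomial_order ar lt \<Longrightarrow> star_word ar u \<Longrightarrow> wfw ar v \<Longrightarrow> wfw ar w \<Longrightarrow> lt v w \<Longrightarrow> lt (subst u v) (subst u w)"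
  unfolding monomial_order_def by blast

lemma max_exists:
  assumes mo: "monomial_order ar lt" and fin: "finite K" and ne: "K \<noteq> {}" and wf: "\<forall>v\<in>K. wfw ar v"
  shows "\<exists>w\<in>K. \<forall>v\<in>K. v \<noteq> w \<longrightarrow> lt v w"
  using fin ne wf
proof (induction K rule: finite_ne_induct)
  case (singleton x) then show ?case by simp
next
  case (insert x F)
  then obtain w where w: "w \<in> F" "\<forall>v\<in>F. v \<noteq> w \<longrightarrow> lt v w" by auto
  have wx: "wfw ar x" "wfw ar w" using insert.prems w(1) by auto
  from mo_total[OF mo wx(2) wx(1)] show ?case
  proof (elim disjE)
    assume "lt w x"
    then have "\<forall>v\<in>insert x F. v \<noteq> x \<longrightarrow> lt v x"
      using w insert.prems mo_trans[OF mo] wx by (metis insert_iff)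
    then show ?thesis by blast
  next
    assume "w = x" with insert.hyps w show ?thesis by auto
  next
    assume "lt x w" with w show ?thesis by auto
  qed
qed

lemma lead_prop:
  assumes mo: "monomial_order ar lt" and op: "is_opoly ar s" and nz: "s \<noteq> 0"
  shows "lead lt s \<in> Poly_Mapping.keys s \<and> (\<forall>v\<in>Poly_Mapping.keys s. v \<noteq> lead lt s \<longrightarrow> lt v (lead lt s))"
proof -
  have wf: "\<forall>v\<in>Poly_Mapping.keys s. wfw ar v" using op by (simp add: is_opoly_def)
  have ne: "Poly_Mapping.keys s \<noteq> {}" using nz by simp
  from max_exists[OF mo finite_keys ne wf] obtain w where w: "w \<in> Poly_Mapping.keys s" "\<forall>v\<in>Poly_Mapping.keys s. v \<noteq> w \<longrightarrow> lt v w" by blast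
  have "\<exists>!w. w \<in> Poly_Mapping.keys s \<and> (\<forall>v\<in>Poly_Mapping.keys s. v \<noteq> w \<longrightarrow> lt v w)"
  proof (rule ex1I[of _ w])
    show "w \<in> Poly_Mapping.keys s \<and> (\<forall>v\<in>Poly_Mapping.keys s. v \<noteq> w \<longrightarrow> lt v w)" using w by blast
  next
    fix w' assume h: "w' \<in> Poly_Mapping.keys s \<and> (\<forall>v\<in>Poly_Mapping.keys s. v \<noteq> w' \<longrightarrow> lt v w')"
    show "w' = w"
    proof (rule ccontr)
      assume "w' \<noteq> w"
      then have "lt w' w" "lt w w'" using h w by auto
      then have "lt w w" using mo_trans[OF mo] wf w h by blast
      then show False using mo_irrefl[OF mo] wf w by blast
    qed
  qed
  then show ?thesis unfolding lead_def by (rule theI')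
qed

definition span :: "('o \<Rightarrow> nat) \<Rightarrow> (('x, 'o) word \<Rightarrow> ('x, 'o) word \<Rightarrow> bool) \<Rightarrow>
    ('x, 'o, 'k::comm_ring_1) opoly set \<Rightarrow> ('x, 'o) word \<Rightarrow> ('x, 'o, 'k) opoly \<Rightarrow> bool" where
  "span ar lt S W p \<longleftrightarrow>
     (\<exists>ts. p = (\<Sum>(a, u, s)\<leftarrow>ts. smult_op a (subst_poly u s)) \<and>
           (\<forall>(a, u, s)\<in>set ts. star_word ar u \<and> s \<in> S \<and> lt (subst u (lead lt s)) W))"

lemma cong_span: "cong_mod ar lt S w p q \<longleftrightarrow> span ar lt S w (p - q)"
  unfolding cong_mod_def span_def by simp

lemma span_zero: "span ar lt S W 0"
  unfolding span_def by (rule exI[of _ "[]"]) simp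

lemma span_add: "span ar lt S W p \<Longrightarrow> span ar lt S W q \<Longrightarrow> span ar lt S W (p + q)"
  unfolding span_def
  apply (elim exE conjE)
  subgoal for ts1 ts2 by (rule exI[of _ "ts1 @ ts2"]) auto
  done

lemma smult_ts: "smult_op c (\<Sum>(a,u,s)\<leftarrow>ts. smult_op a (subst_poly u s)) =
   (\<Sum>(a,u,s)\<leftarrow>map (\<lambda>(a,u,s). (c*a,u,s)) ts. smult_op a (subst_poly u s))"
proof (induction ts)
  case (Cons t ts)
  obtain a u s where "t = (a,u,s)" by (cases t) auto
  with Cons show ?case by (simp add: smult_add smult_smult)
qed simp

lemma span_smult: "span ar lt S W p \<Longrightarrow> span ar lt S W (smult_op c p)"
  unfolding span_def
  apply (elim exE conjE)
  subgoal for ts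
    apply (rule exI[of _ "map (\<lambda>(a,u,s). (c * a, u, s)) ts"])
    apply (rule conjI)
    subgoal by (simp only: smult_ts)
    subgoal by auto
    done
  done

lemma span_uminus: "span ar lt S W p \<Longrightarrow> span ar lt S W (- p)"
  using span_smult[of ar lt S W p "-1"] by (simp add: smult_minus1)

lemma span_diff: "span ar lt S W p \<Longrightarrow> span ar lt S W q \<Longrightarrow> span ar lt S W (p - q)"
  using span_add[of ar lt S W p "- q"] span_uminus by fastforce

lemma span_term: "star_word ar u \<Longrightarrow> s \<in> S \<Longrightarrow> lt (subst u (lead lt s)) W \<Longrightarrow> span ar lt S W (smult_op a (subst_poly u s))"
  unfolding span_def by (rule exI[of _ "[(a,u,s)]"]) simp

lemma span_sum: "(\<And>i. i \<in> A \<Longrightarrow> span ar lt S W (g i)) \<Longrightarrow> span ar lt S W (sum g A)"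
proof (induction A rule: infinite_finite_induct)
  case (infinite A) then show ?case by (simp add: span_zero)
next
  case empty then show ?case by (simp add: span_zero)
next
  case (insert x F) then show ?case by (simp add: span_add)
qed

lemma subst_fun: "subst (toword c) = fill c"
  by (rule ext) simp

lemma span_subst:
  assumes mo: "monomial_order ar lt" and S: "\<forall>s\<in>S. is_opoly ar s \<and> s \<noteq> 0"
    and u: "star_word ar u" and W: "wfw ar W" and sp: "span ar lt S W p"
  shows "span ar lt S (subst u W) (pmap (subst u) p)"
proof -
  from star_decomp[OF u] obtain c where c: "valid ar c" "u = toword c" by blast
  from sp obtain ts where ts: "p = (\<Sum>(a, u, s)\<leftarrow>ts. smult_op a (subst_poly u s))"
    "\<forall>(a, u, s)\<in>set ts. star_word ar u \<and> s \<in> S \<and> lt (subst u (lead lt s)) W"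
    unfolding span_def by blast
  have "span ar lt S (subst u W) (pmap (subst u) (\<Sum>(a, u, s)\<leftarrow>ts. smult_op a (subst_poly u s)))"
    using ts(2)
  proof (induction ts)
    case Nil then show ?case by (simp add: span_zero)
  next
    case (Cons t ts)
    obtain a ui si where t: "t = (a, ui, si)" by (cases t) auto
    have h: "star_word ar ui" "si \<in> S" "lt (subst ui (lead lt si)) W" using Cons.prems t by auto
    from star_decomp[OF h(1)] obtain ci where ci: "valid ar ci" "ui = toword ci" by blast
    have ls: "lead lt si \<in> Poly_Mapping.keys si" "is_opoly ar si" using lead_prop[OF mo] S h(2) by auto
    then have wl: "wfw ar (lead lt si)" by (simp add: is_opoly_def)
    have fc: "fill (cmp c ci) = (\<lambda>x. fill c (fill ci x))" by (rule ext) simp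
    have "span ar lt S (subst u W) (smult_op a (subst_poly (toword (cmp c ci)) si))"
    proof (rule span_term)
      show "star_word ar (toword (cmp c ci))" by (rule star_word_toword) (simp add: valid_cmp c ci)
      show "si \<in> S" by fact
      have "lt (subst u (subst ui (lead lt si))) (subst u W)"
        by (rule mo_mono[OF mo u _ W h(3)]) (simp add: ci wfw_fill wl)
      then show "lt (subst (toword (cmp c ci)) (lead lt si)) (subst u W)" by (simp add: c ci)
    qed
    moreover have "pmap (subst u) (smult_op a (subst_poly ui si)) = smult_op a (subst_poly (toword (cmp c ci)) si)"
      by (simp add: pmap_smult subst_poly_pmap pmap_pmap c ci subst_fun fc)
    ultimately have tm: "span ar lt S (subst u W) (pmap (subst u) (smult_op a (subst_poly ui si)))" by simp
    have IH: "span ar lt S (subst u W) (pmap (subst u) (\<Sum>(a, u, s)\<leftarrow>ts. smult_op a (subst_poly u s)))"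
      using Cons.IH Cons.prems by auto
    show ?case using span_add[OF tm IH] by (simp add: t pmap_add)
  qed
  with ts(1) show ?thesis by simp
qed

lemma GSB_S: "GSB ar lt S \<Longrightarrow> s \<in> S \<Longrightarrow> is_opoly ar s \<and> monic lt s"
  unfolding GSB_def by blast

lemma GSB_S': "GSB ar lt S \<Longrightarrow> \<forall>s\<in>S. is_opoly ar s \<and> s \<noteq> 0"
  unfolding GSB_def monic_def by blast

lemma GSB_incl: "GSB ar lt S \<Longrightarrow> f \<in> S \<Longrightarrow> g \<in> S \<Longrightarrow> star_word ar u \<Longrightarrow> lead lt f = subst u (lead lt g) \<Longrightarrow>
   cong_mod ar lt S (lead lt f) (f - subst_poly u g) 0"
  unfolding GSB_def by blast

lemma GSB_inter: "GSB ar lt S \<Longrightarrow> f \<in> S \<Longrightarrow> g \<in> S \<Longrightarrow> wfw ar a \<Longrightarrow> wfw ar b \<Longrightarrow> lead lt f @ a = b @ lead lt g \<Longrightarrow>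
   length (lead lt f @ a) < length (lead lt f) + length (lead lt g) \<Longrightarrow>
   cong_mod ar lt S (lead lt f @ a) (subst_poly (Var None # emb a) f - subst_poly (emb b @ [Var None]) g) 0"
  unfolding GSB_def by blast

lemma lead_wf: "monomial_order ar lt \<Longrightarrow> GSB ar lt S \<Longrightarrow> s \<in> S \<Longrightarrow> wfw ar (lead lt s)"
  using lead_prop[of ar lt s] GSB_S[of ar lt S s] by (auto simp: is_opoly_def monic_def)

lemma case_incl:
  assumes mo: "monomial_order ar lt" and G: "GSB ar lt S" and s: "s1 \<in> S" "s2 \<in> S"
    and c1: "valid ar c1" and c: "valid ar c" and e: "lead lt s1 = fill c (lead lt s2)"
    and F2: "\<And>x. F2 x = fill c1 (fill c x)"
  shows "span ar lt S (fill c1 (lead lt s1)) (pmap (fill c1) s1 - pmap F2 s2)"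
proof -
  have "cong_mod ar lt S (lead lt s1) (s1 - subst_poly (toword c) s2) 0"
    by (rule GSB_incl[OF G s]) (use c e star_word_toword in auto)
  then have sp: "span ar lt S (lead lt s1) (s1 - subst_poly (toword c) s2)" by (simp add: cong_span)
  from span_subst[OF mo GSB_S'[OF G] star_word_toword[OF c1] lead_wf[OF mo G s(1)] sp]
  have "span ar lt S (fill c1 (lead lt s1)) (pmap (fill c1) (s1 - pmap (fill c) s2))"
    by (simp add: subst_fun subst_poly_pmap)
  moreover have "F2 = (\<lambda>x. fill c1 (fill c x))" using F2 by (rule ext)
  ultimately show ?thesis by (simp add: pmap_diff pmap_pmap)
qed

lemma case_inter:
  assumes mo: "monomial_order ar lt" and G: "GSB ar lt S" and s: "s1 \<in> S" "s2 \<in> S"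
    and c: "valid ar c" and ab: "wfw ar a" "wfw ar b" and e: "lead lt s1 @ a = b @ lead lt s2"
    and l: "length (lead lt s1 @ a) < length (lead lt s1) + length (lead lt s2)"
    and F1: "\<And>x. F1 x = fill c (x @ a)" and F2: "\<And>x. F2 x = fill c (b @ x)"
  shows "span ar lt S (F1 (lead lt s1)) (pmap F1 s1 - pmap F2 s2)"
proof -
  have "cong_mod ar lt S (lead lt s1 @ a) (subst_poly (Var None # emb a) s1 - subst_poly (emb b @ [Var None]) s2) 0"
    by (rule GSB_inter[OF G s ab e l])
  then have sp: "span ar lt S (lead lt s1 @ a) (subst_poly (Var None # emb a) s1 - subst_poly (emb b @ [Var None]) s2)"
    by (simp add: cong_span)
  have wW: "wfw ar (lead lt s1 @ a)" using lead_wf[OF mo G s(1)] ab by (simp add: wfw_iff)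
  have q1: "subst (Var None # emb a) = (\<lambda>x. x @ a)" by (rule ext) simp
  have q2: "subst (emb b @ [Var None]) = (\<lambda>x. b @ x)" by (rule ext) simp
  from span_subst[OF mo GSB_S'[OF G] star_word_toword[OF c] wW sp]
  have "span ar lt S (fill c (lead lt s1 @ a)) (pmap (fill c) (pmap (\<lambda>x. x @ a) s1 - pmap (\<lambda>x. b @ x) s2))"
    by (simp add: subst_fun subst_poly_pmap q1 q2)
  moreover have "F1 = (\<lambda>x. fill c (x @ a))" using F1 by (rule ext)
  moreover have "F2 = (\<lambda>x. fill c (b @ x))" using F2 by (rule ext)
  ultimately show ?thesis by (simp add: pmap_diff pmap_pmap)
qed


lemma case_disj:
  assumes mo: "monomial_order ar lt" and G: "GSB ar lt S" and s: "s1 \<in> S" "s2 \<in> S"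
    and c1: "valid ar c1" and c2: "valid ar c2"
    and A: "\<forall>x. wfw ar x \<longrightarrow> valid ar (A x)" and B: "\<forall>y. wfw ar y \<longrightarrow> valid ar (B y)"
    and AB: "\<forall>x y. wfw ar x \<longrightarrow> wfw ar y \<longrightarrow> fill (A x) y = fill (B y) x"
    and F1: "\<forall>y. fill c1 y = fill (A (lead lt s2)) y" and F2: "\<forall>x. fill c2 x = fill (B (lead lt s1)) x"
    and W1: "w = fill c1 (lead lt s1)" and W2: "w = fill c2 (lead lt s2)"
  shows "span ar lt S w (pmap (fill c1) s1 - pmap (fill c2) s2)"
proof -
  define M where "M = lead lt s1"
  define N where "N = lead lt s2"
  define K1 where "K1 = Poly_Mapping.keys s1"
  define K2 where "K2 = Poly_Mapping.keys s2"
  have op1: "is_opoly ar s1" "monic lt s1" and op2: "is_opoly ar s2" "monic lt s2" using GSB_S[OF G] s by auto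
  have L1: "M \<in> K1" "\<forall>v\<in>K1. v \<noteq> M \<longrightarrow> lt v M" using lead_prop[OF mo op1(1)] op1(2) unfolding M_def K1_def monic_def by auto
  have L2: "N \<in> K2" "\<forall>v\<in>K2. v \<noteq> N \<longrightarrow> lt v N" using lead_prop[OF mo op2(1)] op2(2) unfolding N_def K2_def monic_def by auto
  have one: "Poly_Mapping.lookup s1 M = 1" "Poly_Mapping.lookup s2 N = 1" using op1(2) op2(2) unfolding M_def N_def monic_def by auto
  have wK1: "\<forall>m\<in>K1. wfw ar m" using op1(1) unfolding K1_def is_opoly_def by auto
  have wK2: "\<forall>m\<in>K2. wfw ar m" using op2(1) unfolding K2_def is_opoly_def by auto
  have fK: "finite K1" "finite K2" unfolding K1_def K2_def by auto
  define g where "g m n = Poly_Mapping.single (fill (A n) m) (Poly_Mapping.lookup s1 m * Poly_Mapping.lookup s2 n)" for m n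
  define T1 where "T1 = (\<Sum>m\<in>K1-{M}. smult_op (Poly_Mapping.lookup s1 m) (subst_poly (toword (B m)) s2))"
  define T2 where "T2 = (\<Sum>n\<in>K2-{N}. smult_op (Poly_Mapping.lookup s2 n) (subst_poly (toword (A n)) s1))"
  have inner1: "smult_op (Poly_Mapping.lookup s1 m) (subst_poly (toword (B m)) s2) = (\<Sum>n\<in>K2. g m n)" if "m \<in> K1" for m
  proof -
    have "smult_op (Poly_Mapping.lookup s1 m) (subst_poly (toword (B m)) s2) =
          (\<Sum>n\<in>K2. Poly_Mapping.single (fill (B m) n) (Poly_Mapping.lookup s1 m * Poly_Mapping.lookup s2 n))"
      by (simp add: subst_poly_pmap subst_fun pmap_def smult_sum smult_single K2_def)
    also have "\<dots> = (\<Sum>n\<in>K2. g m n)"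
      by (rule sum.cong) (use AB wK1 wK2 that in \<open>auto simp: g_def\<close>)
    finally show ?thesis .
  qed
  have inner2: "smult_op (Poly_Mapping.lookup s2 n) (subst_poly (toword (A n)) s1) = (\<Sum>m\<in>K1. g m n)" if "n \<in> K2" for n
    by (simp add: subst_poly_pmap subst_fun pmap_def smult_sum smult_single K1_def g_def mult.commute)
  have P1: "pmap (fill c1) s1 = (\<Sum>m\<in>K1. g m N)"
    unfolding pmap_def K1_def[symmetric] by (rule sum.cong) (use F1 one in \<open>auto simp: g_def N_def\<close>)
  have P2: "pmap (fill c2) s2 = (\<Sum>n\<in>K2. g M n)"
    unfolding pmap_def K2_def[symmetric]
    by (rule sum.cong) (use F2 one AB wK1 wK2 L1 in \<open>auto simp: g_def M_def\<close>)
  define D where "D = (\<Sum>m\<in>K1. \<Sum>n\<in>K2. g m n)"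
  have "D = (\<Sum>n\<in>K2. g M n) + (\<Sum>m\<in>K1-{M}. \<Sum>n\<in>K2. g m n)"
    unfolding D_def by (rule sum.remove[OF fK(1) L1(1)])
  also have "(\<Sum>m\<in>K1-{M}. \<Sum>n\<in>K2. g m n) = T1"
    unfolding T1_def by (rule sum.cong) (auto simp: inner1)
  finally have D1: "D = pmap (fill c2) s2 + T1" using P2 by simp
  have "D = (\<Sum>n\<in>K2. \<Sum>m\<in>K1. g m n)" unfolding D_def by (rule sum.swap)
  also have "\<dots> = (\<Sum>m\<in>K1. g m N) + (\<Sum>n\<in>K2-{N}. \<Sum>m\<in>K1. g m n)"
    by (rule sum.remove[OF fK(2) L2(1)])
  also have "(\<Sum>n\<in>K2-{N}. \<Sum>m\<in>K1. g m n) = T2"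
    unfolding T2_def by (rule sum.cong) (auto simp: inner2)
  finally have D2: "D = pmap (fill c1) s1 + T2" using P1 by simp
  have eq: "pmap (fill c1) s1 - pmap (fill c2) s2 = T1 - T2"
    using D1 D2 by (simp add: algebra_simps)
  have sT1: "span ar lt S w T1"
    unfolding T1_def
  proof (rule span_sum, rule span_term)
    fix m assume m: "m \<in> K1 - {M}"
    then have wm: "wfw ar m" using wK1 by auto
    show "star_word ar (toword (B m))" using B wm by (simp add: star_word_toword)
    show "s2 \<in> S" by fact
    have "lt (subst (toword c1) m) (subst (toword c1) M)"
      by (rule mo_mono[OF mo star_word_toword[OF c1] wm]) (use wK1 L1 m in auto)
    moreover have "subst (toword (B m)) (lead lt s2) = fill c1 m"
      using AB wm wK2 L2 F1 by (simp add: N_def)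
    ultimately show "lt (subst (toword (B m)) (lead lt s2)) w" using W1 by (simp add: M_def)
  qed
  have sT2: "span ar lt S w T2"
    unfolding T2_def
  proof (rule span_sum, rule span_term)
    fix n assume n: "n \<in> K2 - {N}"
    then have wn: "wfw ar n" using wK2 by auto
    show "star_word ar (toword (A n))" using A wn by (simp add: star_word_toword)
    show "s1 \<in> S" by fact
    have "lt (subst (toword c2) n) (subst (toword c2) N)"
      by (rule mo_mono[OF mo star_word_toword[OF c2] wn]) (use wK2 L2 n in auto)
    moreover have "subst (toword (A n)) (lead lt s1) = fill c2 n"
      using AB wn wK1 L1 F2 by (simp add: M_def)
    ultimately show "lt (subst (toword (A n)) (lead lt s1)) w" using W2 by (simp add: N_def)
  qed
  show ?thesis using span_diff[OF sT1 sT2] eq by simp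
qed


lemma neg_swap: "span ar lt S w (q - p) \<Longrightarrow> span ar lt S w (p - q)"
  using span_uminus[of ar lt S w "q - p"] by simp

theorem lemma3p3:
  fixes ar :: "'o \<Rightarrow> nat"
    and lt :: "('x, 'o) word \<Rightarrow> ('x, 'o) word \<Rightarrow> bool"
    and S :: "('x, 'o, 'k::comm_ring_1) opoly set"
  assumes "monomial_order ar lt"
    and "GSB ar lt S"
    and "star_word ar u1" and "star_word ar u2"
    and "s1 \<in> S" and "s2 \<in> S"
    and "w = subst u1 (lead lt s1)" and "w = subst u2 (lead lt s2)"
  shows "cong_mod ar lt S w (subst_poly u1 s1) (subst_poly u2 s2)"
proof -
  note mo = assms(1) and G = assms(2) and s = assms(5,6)
  from star_decomp[OF assms(3)] obtain c1 where c1: "valid ar c1" "u1 = toword c1" by blast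
  from star_decomp[OF assms(4)] obtain c2 where c2: "valid ar c2" "u2 = toword c2" by blast
  have w1: "wfw ar (lead lt s1)" and w2: "wfw ar (lead lt s2)" using lead_wf[OF mo G] s by auto
  have W1: "w = fill c1 (lead lt s1)" and W2: "w = fill c2 (lead lt s2)" using assms(7,8) c1 c2 by auto
  have cl: "classify ar (lead lt s1) (lead lt s2) (fill c1) (fill c2)"
    by (rule classify_all[OF c1(1) c2(1) w1 w2]) (use W1 W2 in simp)
  have "span ar lt S w (pmap (fill c1) s1 - pmap (fill c2) s2)"
    using cl unfolding classify_def
  proof (elim disjE exE conjE)
    fix c assume h: "valid ar c" "lead lt s1 = fill c (lead lt s2)" "\<forall>x. fill c2 x = fill c1 (fill c x)"
    show ?thesis using case_incl[OF mo G s c1(1) h(1,2), of "fill c2"] h(3) W1 by simp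
  next
    fix c assume h: "valid ar c" "lead lt s2 = fill c (lead lt s1)" "\<forall>x. fill c1 x = fill c2 (fill c x)"
    show ?thesis using case_incl[OF mo G s(2,1) c2(1) h(1,2), of "fill c1"] h(3) W2 by (simp add: neg_swap)
  next
    fix A B assume h: "\<forall>x. wfw ar x \<longrightarrow> valid ar (A x)" "\<forall>y. wfw ar y \<longrightarrow> valid ar (B y)"
      "\<forall>x y. wfw ar x \<longrightarrow> wfw ar y \<longrightarrow> fill (A x) y = fill (B y) x"
      "\<forall>y. fill c1 y = fill (A (lead lt s2)) y" "\<forall>x. fill c2 x = fill (B (lead lt s1)) x"
    show ?thesis by (rule case_disj[OF mo G s c1(1) c2(1) h W1 W2])
  next
    fix c a b assume h: "valid ar c" "wfw ar a" "wfw ar b" "lead lt s1 @ a = b @ lead lt s2"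
      "length (lead lt s1 @ a) < length (lead lt s1) + length (lead lt s2)"
      "\<forall>x. fill c1 x = fill c (x @ a)" "\<forall>x. fill c2 x = fill c (b @ x)"
    show ?thesis using case_inter[OF mo G s h(1-5), of "fill c1" "fill c2"] h(6,7) W1 by simp
  next
    fix c a b assume h: "valid ar c" "wfw ar a" "wfw ar b" "lead lt s2 @ a = b @ lead lt s1"
      "length (lead lt s2 @ a) < length (lead lt s2) + length (lead lt s1)"
      "\<forall>x. fill c2 x = fill c (x @ a)" "\<forall>x. fill c1 x = fill c (b @ x)"
    show ?thesis using case_inter[OF mo G s(2,1) h(1-5), of "fill c2" "fill c1"] h(6,7) W2 by (simp add: neg_swap)
  qed
  then show ?thesis by (simp add: cong_span subst_poly_pmap c1 c2 subst_fun)
qed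

end
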